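(* Let $p$ be a real polynomial having at least one non-real root, of the form $$p(z)=\prod_{i=1}^s (z-r_i)^{l_i}\prod_{i=1}^d (z-z_i)^{m_i}\prod_{i=1}^d (z-\bar z_i)^{m_i},$$ where $d\ge1$, $r_1,\dots,r_s$ are distinct negative reals, $z_1,\dots,z_d$ are distinct with $z_k=x_k+iy_k$, $x_k<0$, $y_k>0$, and $l_i,m_i\in\mathbb N$. Let $q$ be a polynomial having no common zeros with $p$ and $\deg(q)<\deg(p)$. If there is a non-real root, say $z_1$, of $p$ such that $\Re(z_1)>r_i$ for every $i=1,\dots,s$ and $\Re(z_1)>\Re(z_i)$ for every $i=2,\dots,d$, then $(q(n)/p(n))_{n\in\mathbb Z_+}$ is not a Hausdorff moment sequence.
   Context: A sequence $(x_n)_{n\in\mathbb Z_+}$ of positive numbers is a Hausdorff moment sequence if there is a positive Radon measure $\mu$ on $[0,1]$ with $x_n=\int_0^1 t^n\,d\mu(t)$ for all $n\in\mathbb Z_+$. *)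

theory Defs
  imports "HOL-Analysis.Analysis" "HOL-Computational_Algebra.Polynomial"
begin

definition hausdorff_moment_seq :: "(nat \<Rightarrow> real) \<Rightarrow> bool" where
  "hausdorff_moment_seq x \<longleftrightarrow>
     (\<forall>n. x n > 0) \<and>
     (\<exists>M :: real measure.
        sets M = sets (restrict_space borel {0..1::real}) \<and>
        emeasure M (space M) < \<infinity> \<and>
        (\<forall>n. x n = (\<integral>t. t ^ n \<partial>M)))"

end

theory Submission
  imports Defs "HOL-Computational_Algebra.Fundamental_Theorem_Algebra"
begin


definition Bp :: "complex set \<Rightarrow> (complex \<Rightarrow> nat) \<Rightarrow> complex \<Rightarrow> nat \<Rightarrow> complex poly" where
  "Bp A mu a j = [:-a,1:]^(mu a - Suc j) * (\<Prod>b\<in>A-{a}. [:-b,1:]^(mu b))"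

lemma Bp_shift:
  assumes "finite A" "a \<in> A" "b \<in> A" "mu a > 0" "j < (mu(a := mu a - 1)) b"
  shows "[:-a,1:] * Bp A (mu(a := mu a - 1)) b j = Bp A mu b j"
proof (cases "b = a")
  case True
  have e: "(\<Prod>b'\<in>A-{a}. [:-b',1:]^((mu(a := mu a - 1)) b')) = (\<Prod>b'\<in>A-{a}. [:-b',1:]^(mu b'))"
    by (rule prod.cong) auto
  have "mu a - Suc j = Suc (mu a - 1 - Suc j)" using assms True by auto
  then show ?thesis using True unfolding Bp_def e by (simp add: algebra_simps)
next
  case False
  have e1: "(\<Prod>b'\<in>A-{b}. [:-b',1:]^((mu(a := mu a - 1)) b')) =
     [:-a,1:]^(mu a - 1) * (\<Prod>b'\<in>A-{b}-{a}. [:-b',1:]^(mu b'))"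
    using assms False by (subst prod.remove[of _ a]) (auto intro!: prod.cong)
  have e2: "(\<Prod>b'\<in>A-{b}. [:-b',1:]^(mu b')) =
     [:-a,1:]^(mu a) * (\<Prod>b'\<in>A-{b}-{a}. [:-b',1:]^(mu b'))"
    using assms False by (subst prod.remove[of _ a]) auto
  have e3: "[:-a,1:]^(mu a) = [:-a,1:] * [:-a,1:]^(mu a - 1)"
    using assms by (metis Suc_diff_1 power_Suc)
  have X: "(\<Prod>b'\<in>A-{b}. [:-b',1:]^(mu b')) = [:-a,1:] * (\<Prod>b'\<in>A-{b}. [:-b',1:]^((mu(a := mu a - 1)) b'))"
    unfolding e1 e2 e3 by (simp only: mult.assoc)
  have B': "Bp A (mu(a := mu a - 1)) b j = [:-b,1:]^(mu b - Suc j) *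
      (\<Prod>b'\<in>A-{b}. [:-b',1:]^((mu(a := mu a - 1)) b'))" using False by (simp add: Bp_def)
  show ?thesis unfolding B' unfolding Bp_def X by (rule mult.left_commute)
qed

lemma pf_exists:
  fixes Q :: "complex poly"
  assumes "finite A" "degree Q < degree (\<Prod>a\<in>A. [:-a,1:]^(mu a))"
  shows "\<exists>c. Q = (\<Sum>a\<in>A. \<Sum>j<mu a. smult (c a j) (Bp A mu a j))"
  using assms(2)
proof (induction "sum mu A" arbitrary: mu Q)
  case 0
  then have "\<forall>a\<in>A. mu a = 0" using assms(1) by simp
  then have "(\<Prod>a\<in>A. [:-a,1:]^(mu a)) = 1" by simp
  then show ?case using 0 by simp
next
  case (Suc n)
  have "\<exists>a\<in>A. mu a \<noteq> 0"
  proof (rule ccontr)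
    assume "\<not> ?thesis"
    then have "sum mu A = 0" by simp
    with Suc.hyps(2) show False by simp
  qed
  then obtain a where aA: "a \<in> A" and ma: "mu a > 0" by blast
  define mu' where "mu' = mu(a := mu a - 1)"
  have sum': "n = sum mu' A"
  proof -
    have "sum mu A = mu a + sum mu (A - {a})" using aA assms(1) by (simp add: sum.remove)
    moreover have "sum mu' A = mu' a + sum mu' (A - {a})" using aA assms(1) by (simp add: sum.remove)
    moreover have "sum mu' (A - {a}) = sum mu (A - {a})" unfolding mu'_def by (rule sum.cong) auto
    ultimately show ?thesis using Suc.hyps(2) ma unfolding mu'_def by simp
  qed
  define W where "W = (\<Prod>b\<in>A-{a}. [:-b,1:]^(mu b))"
  have WB: "W = Bp A mu a (mu a - 1)" unfolding Bp_def W_def using ma by simp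
  have Wa: "poly W a \<noteq> 0" unfolding W_def poly_prod using assms(1)
    by (subst prod_zero_iff) auto
  define P where "P = (\<Prod>a\<in>A. [:-a,1:]^(mu a))"
  define P' where "P' = (\<Prod>a\<in>A. [:-a,1:]^(mu' a))"
  have PW: "P = [:-a,1:]^(mu a) * W" unfolding P_def W_def using aA assms(1)
    by (simp add: prod.remove)
  have P'W: "P' = [:-a,1:]^(mu a - 1) * W" unfolding P'_def W_def mu'_def using aA assms(1)
    by (subst prod.remove[of _ a]) (auto intro!: prod.cong)
  have PP': "P = [:-a,1:] * P'" using PW P'W ma by (metis Suc_diff_1 mult.assoc power_Suc)
  have Wnz: "W \<noteq> 0" using Wa by auto
  have P'nz: "P' \<noteq> 0" using P'W Wnz by auto
  have "degree ([:-a,1:] * P') = degree [:-a,1:] + degree P'" by (rule degree_mult_eq) (use P'nz in auto)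
  then have degP: "degree P = Suc (degree P')" unfolding PP' by simp
  have "degree ([:-a,1:]^(mu a) * W) = degree ([:-a,1:]^(mu a)) + degree W" by (rule degree_mult_eq) (use Wnz in auto)
  then have degW: "degree W < degree P" unfolding PW using ma by (simp add: degree_power_eq)
  define c0 where "c0 = poly Q a / poly W a"
  define R where "R = Q - smult c0 W"
  have "poly R a = 0" unfolding R_def c0_def using Wa by simp
  then obtain Q2 where RQ2: "R = [:-a,1:] * Q2" by (metis poly_eq_0_iff_dvd dvdE)
  have degR: "degree R < degree P" unfolding R_def using Suc.prems degW
    by (intro degree_diff_less) (auto simp: P_def intro: le_less_trans[OF degree_smult_le])
  have "\<exists>c'. Q2 = (\<Sum>b\<in>A. \<Sum>j<mu' b. smult (c' b j) (Bp A mu' b j))"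
  proof (cases "Q2 = 0")
    case True
    then show ?thesis by (intro exI[of _ "\<lambda>_ _. 0"]) simp
  next
    case False
    then have "degree ([:-a,1:] * Q2) = degree [:-a,1:] + degree Q2" by (intro degree_mult_eq) auto
    then have "degree R = Suc (degree Q2)" unfolding RQ2 by simp
    then have "degree Q2 < degree P'" using degR degP by simp
    then show ?thesis using Suc.hyps(1)[OF sum'] unfolding P'_def by blast
  qed
  then obtain c' where c': "Q2 = (\<Sum>b\<in>A. \<Sum>j<mu' b. smult (c' b j) (Bp A mu' b j))" by blast
  have BS: "\<And>b j. b \<in> A \<Longrightarrow> j < mu' b \<Longrightarrow> [:-a,1:] * Bp A mu' b j = Bp A mu b j"
    using Bp_shift[OF assms(1) aA] ma unfolding mu'_def by blast
  have "[:-a,1:] * Q2 = (\<Sum>b\<in>A. \<Sum>j<mu' b. smult (c' b j) (Bp A mu b j))"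
    unfolding c' sum_distrib_left
    by (intro sum.cong refl) (auto simp: mult_smult_right BS simp del: mult_pCons_left)
  also have "\<dots> = (\<Sum>j<mu a - 1. smult (c' a j) (Bp A mu a j)) +
       (\<Sum>b\<in>A-{a}. \<Sum>j<mu b. smult (c' b j) (Bp A mu b j))"
    using aA assms(1) by (subst sum.remove[of _ a]) (auto simp: mu'_def intro!: sum.cong)
  finally have eQ2: "[:-a,1:] * Q2 = \<dots>" .
  define c where "c = (\<lambda>b j. if b = a \<and> j = mu a - 1 then c0 else c' b j)"
  have "(\<Sum>b\<in>A. \<Sum>j<mu b. smult (c b j) (Bp A mu b j)) =
     (\<Sum>j<mu a. smult (c a j) (Bp A mu a j)) + (\<Sum>b\<in>A-{a}. \<Sum>j<mu b. smult (c b j) (Bp A mu b j))"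
    using aA assms(1) by (simp add: sum.remove)
  also have "(\<Sum>j<mu a. smult (c a j) (Bp A mu a j)) =
      smult c0 W + (\<Sum>j<mu a - 1. smult (c' a j) (Bp A mu a j))"
  proof -
    have "{..<mu a} = insert (mu a - 1) {..<mu a - 1}" using ma by auto
    then show ?thesis using WB by (simp add: c_def)
  qed
  also have "(\<Sum>b\<in>A-{a}. \<Sum>j<mu b. smult (c b j) (Bp A mu b j)) =
      (\<Sum>b\<in>A-{a}. \<Sum>j<mu b. smult (c' b j) (Bp A mu b j))"
    by (intro sum.cong refl) (auto simp: c_def)
  finally have "(\<Sum>b\<in>A. \<Sum>j<mu b. smult (c b j) (Bp A mu b j)) = smult c0 W + [:-a,1:] * Q2"
    using eQ2 by simp
  also have "\<dots> = Q" using RQ2 unfolding R_def by (metis add_diff_cancel_left' diff_add_cancel)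
  finally show ?case by metis
qed



lemma expu_lim:
  assumes "(\<delta>::real) > 0"
  shows "((\<lambda>u. exp (- \<delta> * u) * u ^ j) \<longlongrightarrow> 0) at_top"
proof -
  have f: "filterlim (\<lambda>u. \<delta> * u) at_top at_top"
    by (rule filterlim_tendsto_pos_mult_at_top[OF tendsto_const assms filterlim_ident])
  have "((\<lambda>u. (\<delta> * u) ^ j / exp (\<delta> * u)) \<longlongrightarrow> 0) at_top"
    by (rule filterlim_compose[OF tendsto_power_div_exp_0 f])
  then have "((\<lambda>u. (\<delta> * u) ^ j / exp (\<delta> * u) / \<delta> ^ j) \<longlongrightarrow> 0 / \<delta> ^ j) at_top"
    by (intro tendsto_divide tendsto_const) (use assms in auto)
  moreover have "(\<delta> * u) ^ j / exp (\<delta> * u) / \<delta> ^ j = exp (- \<delta> * u) * u ^ j" for u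
    using assms by (simp add: power_mult_distrib exp_minus field_simps)
  ultimately show ?thesis by simp
qed

lemma expln_lim:
  assumes "(\<sigma>::real) > 0"
  shows "((\<lambda>t. exp (\<sigma> * ln t) * \<bar>ln t\<bar>^j) \<longlongrightarrow> 0) (at_right 0)"
proof -
  have f: "filterlim (\<lambda>t. - ln t) at_top (at_right (0::real))"
    using ln_at_0 by (simp add: filterlim_uminus_at_bot)
  have "((\<lambda>t. exp (- \<sigma> * (- ln t)) * (- ln t) ^ j) \<longlongrightarrow> 0) (at_right 0)"
    by (rule filterlim_compose[OF expu_lim[OF assms] f])
  moreover have "\<forall>\<^sub>F t in at_right 0. exp (- \<sigma> * (- ln t)) * (- ln t) ^ j = exp (\<sigma> * ln t) * \<bar>ln t\<bar>^j"
    by (rule eventually_at_rightI[of 0 1]) (auto simp: abs_of_neg)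
  ultimately show ?thesis by (rule Lim_transform_eventually)
qed


definition EE :: "complex \<Rightarrow> nat \<Rightarrow> complex \<Rightarrow> complex" where
  "EE b k z = exp (b * Ln z) / z * (- Ln z)^k"

fun FF :: "complex \<Rightarrow> nat \<Rightarrow> complex \<Rightarrow> complex" where
  "FF b 0 z = exp (b * Ln z) / b"
| "FF b (Suc k) z = (exp (b * Ln z) * (- Ln z)^(Suc k) + of_nat (Suc k) * FF b k z) / b"

lemma FF_deriv:
  assumes "b \<noteq> 0" "Re z > 0"
  shows "(FF b k has_field_derivative EE b k z) (at z)"
proof -
  have z: "z \<notin> \<real>\<^sub>\<le>\<^sub>0" using assms(2) complex_nonpos_Reals_iff[of z] by linarith
  then have z0: "z \<noteq> 0" by auto
  have dL: "(Ln has_field_derivative inverse z) (at z)" by (rule has_field_derivative_Ln[OF z])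
  have dE: "((\<lambda>z. exp (b * Ln z)) has_field_derivative exp (b * Ln z) * (b * inverse z)) (at z)"
    by (rule DERIV_chain2[OF DERIV_exp]) (use z in \<open>auto intro!: derivative_eq_intros dL\<close>)
  show ?thesis
  proof (induction k)
    case 0
    have "((\<lambda>z. exp (b * Ln z) / b) has_field_derivative exp (b * Ln z) * (b * inverse z) / b) (at z)"
      by (rule DERIV_cdivide[OF dE])
    moreover have "exp (b * Ln z) * (b * inverse z) / b = EE b 0 z"
      using assms(1) z0 unfolding EE_def by (simp add: field_simps)
    ultimately show ?case by simp
  next
    case (Suc k)
    have dP: "((\<lambda>z. (- Ln z)^(Suc k)) has_field_derivative
        (of_nat (Suc k) * (- Ln z)^k * (- inverse z))) (at z)"
      by (rule derivative_eq_intros dL refl | simp)+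
    have eq: "FF b (Suc k) = (\<lambda>z. (exp (b * Ln z) * (- Ln z)^(Suc k) + of_nat (Suc k) * FF b k z) / b)"
      by (rule ext) simp
    show ?case unfolding eq
      apply (rule DERIV_cong[OF DERIV_cdivide[OF DERIV_add[OF DERIV_mult[OF dE dP] DERIV_cmult[OF Suc.IH, of "of_nat (Suc k)"]], of b]])
      using assms(1) z0 unfolding EE_def by (simp add: field_simps)
  qed
qed

lemma FF_one: "FF b k 1 = fact k / b ^ Suc k"
  by (induction k) (auto simp: field_simps)

lemma FF_lim0:
  assumes "Re b > 0"
  shows "((\<lambda>t::real. FF b k (of_real t)) \<longlongrightarrow> 0) (at_right 0)"
proof (induction k)
  have b0: "b \<noteq> 0" using assms by auto
  have *: "((\<lambda>t::real. exp (Re b * ln t) * \<bar>ln t\<bar>^j) \<longlongrightarrow> 0) (at_right 0)" for j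
    by (rule expln_lim[OF assms])
  have nrm: "norm (exp (b * Ln (of_real t)) * (- Ln (of_real t))^j) = exp (Re b * ln t) * \<bar>ln t\<bar>^j"
    if "t > 0" for t :: real and j
    using that by (simp add: Ln_of_real norm_mult norm_power)
  have A: "((\<lambda>t::real. exp (b * Ln (of_real t)) * (- Ln (of_real t))^j) \<longlongrightarrow> 0) (at_right 0)" for j
    apply (rule Lim_null_comparison[OF _ *[of j]])
    apply (rule eventually_at_rightI[of 0 1])
    apply (auto simp: nrm)
    done
  {
    case 0
    show ?case using tendsto_divide[OF A[of 0] tendsto_const[of b]] b0 by simp
  next
    case (Suc k)
    show ?case using tendsto_divide[OF tendsto_add[OF A[of "Suc k"] tendsto_mult[OF tendsto_const[of "of_nat (Suc k)"] Suc.IH]] tendsto_const[of b]] b0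
      by simp
  }
qed

definition ee :: "complex \<Rightarrow> nat \<Rightarrow> real \<Rightarrow> complex" where
  "ee b k t = EE b k (of_real t)"

lemma ee_0[simp]: "ee b k 0 = 0"
  by (simp add: ee_def EE_def)

lemma ee_pos: "t > 0 \<Longrightarrow> ee b k t = exp (b * of_real (ln t)) / of_real t * of_real ((- ln t)^k)"
  by (simp add: ee_def EE_def Ln_of_real)

lemma ee_shift: "t \<ge> 0 \<Longrightarrow> of_real (t ^ n) * ee b k t = ee (b + of_nat n) k t"
proof (cases "t = 0")
  case False
  assume "t \<ge> 0"
  then have t: "t > 0" using False by auto
  have "exp ((b + of_nat n) * of_real (ln t)) = exp (b * of_real (ln t)) * exp (of_real (real n * ln t))"
    by (simp add: distrib_right exp_add)
  also have "exp (of_real (real n * ln t)) = (of_real (t ^ n) :: complex)"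
  proof -
    have "exp (real n * ln t) = t ^ n" using t by (simp add: exp_of_nat_mult)
    then show ?thesis by (simp only: exp_of_real)
  qed
  finally show ?thesis using t by (simp add: ee_pos)
qed simp

lemma ee_has_integral:
  assumes "Re b > 0"
  shows "(ee b k has_integral (fact k / b ^ Suc k)) {0..1}"
proof -
  have b0: "b \<noteq> 0" using assms by auto
  define Fr where "Fr = (\<lambda>t::real. if t = 0 then 0 else FF b k (of_real t))"
  have der: "(Fr has_vector_derivative ee b k x) (at x)" if "x > 0" for x
  proof -
    have d: "(FF b k has_field_derivative EE b k (of_real x)) (at (of_real x))"
      using FF_deriv[OF b0] that by simp
    have D: "((\<lambda>t. FF b k (of_real t)) has_vector_derivative EE b k (of_real x)) (at x)"
      by (rule has_vector_derivative_real_field[OF d])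
    have E: "\<And>y. y \<in> {0<..} \<Longrightarrow> FF b k (of_real y) = Fr y" by (simp add: Fr_def)
    have "(Fr has_vector_derivative EE b k (of_real x)) (at x)"
      by (rule has_vector_derivative_transform_within_open[OF D open_greaterThan _ E]) (use that in simp)
    then show ?thesis by (simp add: ee_def)
  qed
  have cont: "continuous_on {0..1} Fr"
    unfolding continuous_on_eq_continuous_within
  proof
    fix x :: real assume x: "x \<in> {0..1}"
    show "continuous (at x within {0..1}) Fr"
    proof (cases "x = 0")
      case True
      have "(Fr \<longlongrightarrow> 0) (at_right 0)"
      proof (rule Lim_transform_eventually[OF FF_lim0[OF assms, of k]])
        show "\<forall>\<^sub>F t in at_right 0. FF b k (of_real t) = Fr t"
          by (rule eventually_at_rightI[of 0 1]) (auto simp: Fr_def)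
      qed
      then show ?thesis using True unfolding continuous_within
        by (simp add: at_within_Icc_at_right Fr_def)
    next
      case False
      then have "x > 0" using x by auto
      have "continuous (at x) Fr"
        by (rule has_vector_derivative_continuous[OF der[OF \<open>x > 0\<close>]])
      then show ?thesis
        by (rule continuous_at_imp_continuous_within)
    qed
  qed
  have "(ee b k has_integral (Fr 1 - Fr 0)) {0..1}"
    by (rule fundamental_theorem_of_calculus_interior[OF _ cont der]) auto
  then show ?thesis by (simp add: Fr_def FF_one)
qed

lemma ee_leb:
  assumes "Re b > 0"
  shows "integrable (lebesgue_on {0..1}) (ee b k)"
    and "integral\<^sup>L (lebesgue_on {0..1}) (ee b k) = fact k / b ^ Suc k"
proof -
  have I: "(ee b k has_integral (fact k / b ^ Suc k)) {0..1}" by (rule ee_has_integral[OF assms])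
  have Ir: "((\<lambda>t. Re (ee (of_real (Re b)) k t)) has_integral Re (fact k / (of_real (Re b)) ^ Suc k)) {0..1}"
    by (rule has_integral_Re, rule ee_has_integral) (use assms in simp)
  have bnd: "norm (ee b k t) \<le> Re (ee (of_real (Re b)) k t)" if "t \<in> {0..1}" for t
  proof (cases "t = 0")
    case False
    then have t: "t > 0" "t \<le> 1" using that by auto
    then have l: "ln t \<le> 0" by simp
    have e: "exp (of_real (Re b) * of_real (ln t)) = (of_real (exp (Re b * ln t)) :: complex)"
      by (simp only: of_real_mult[symmetric] exp_of_real)
    have e2: "Re (ee (of_real (Re b)) k t) = exp (Re b * ln t) / t * (- ln t) ^ k"
      using t by (simp only: ee_pos exp_of_real of_real_divide[symmetric] of_real_mult[symmetric] Re_complex_of_real)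
    have "norm (ee b k t) = exp (Re b * ln t) / t * \<bar>ln t\<bar> ^ k"
      using t by (simp add: ee_pos norm_mult norm_divide norm_power)
    also have "\<dots> = Re (ee (of_real (Re b)) k t)"
      unfolding e2 using l by (simp add: abs_of_nonpos)
    finally show ?thesis by simp
  qed simp
  have "ee b k absolutely_integrable_on {0..1}"
    by (rule absolutely_integrable_integrable_bound[OF bnd]) (use I Ir in \<open>auto simp: integrable_on_def\<close>)
  then show int: "integrable (lebesgue_on {0..1}) (ee b k)"
    by (simp add: integrable_restrict_space set_integrable_def)
  show "integral\<^sup>L (lebesgue_on {0..1}) (ee b k) = fact k / b ^ Suc k"
    using lebesgue_integral_eq_integral[OF int] I by (simp add: integral_unique)
qed



lemma density_contra:
  fixes M :: "real measure" and g :: "real \<Rightarrow> real" and x :: "nat \<Rightarrow> real" and t0 :: real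
  assumes sM: "sets M = sets (restrict_space borel {0..1})"
    and fin: "emeasure M (space M) < \<infinity>"
    and xM: "\<And>n. x n = (\<integral>t. t^n \<partial>M)"
    and gi: "integrable (lebesgue_on {0..1}) g"
    and xg: "\<And>n. x n = (\<integral>t. t^n * g t \<partial>(lebesgue_on {0..1}))"
    and t0: "0 < t0" "t0 < 1" and gc: "isCont g t0" and gneg: "g t0 < 0"
  shows False
proof -
  define N where "N = lebesgue_on {0..1::real}"
  have spN: "space N = {0..1}" unfolding N_def by simp
  have spM: "space M = {0..1}" using sets_eq_imp_space_eq[OF sM] by simp
  interpret finite_measure M using fin by (intro finite_measureI) simp
  have measM: "f \<in> borel_measurable M" if "continuous_on {0..1} f" for f :: "real \<Rightarrow> real"
    unfolding measurable_cong_sets[OF sM refl] by (rule borel_measurable_continuous_on_restrict[OF that])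
  have bnd: "\<exists>B. \<forall>t\<in>{0..1}. \<bar>f t\<bar> \<le> B" if "continuous_on {0..1} f" for f :: "real \<Rightarrow> real"
  proof -
    have "bounded (f ` {0..1})"
      by (rule compact_imp_bounded[OF compact_continuous_image[OF that compact_Icc]])
    then show ?thesis by (auto simp: bounded_real)
  qed
  have intM: "integrable M f" if cf: "continuous_on {0..1} f" for f :: "real \<Rightarrow> real"
  proof -
    obtain B where B: "\<forall>t\<in>{0..1}. \<bar>f t\<bar> \<le> B" using bnd[OF cf] by blast
    show ?thesis
      by (rule integrable_const_bound[of _ B]) (use B spM measM[OF cf] in \<open>auto intro!: AE_I2\<close>)
  qed
  have gm: "g \<in> borel_measurable N" using gi unfolding N_def by (rule borel_measurable_integrable)
  have gi': "integrable N g" using gi unfolding N_def .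
  have measN: "f \<in> borel_measurable N" if "continuous_on {0..1} f" for f :: "real \<Rightarrow> real"
    unfolding N_def by (rule continuous_imp_measurable_on_sets_lebesgue[OF that]) simp
  have intN: "integrable N (\<lambda>t. f t * g t)" if cf: "continuous_on {0..1} f" for f :: "real \<Rightarrow> real"
  proof -
    obtain B where B: "\<forall>t\<in>{0..1}. \<bar>f t\<bar> \<le> B" using bnd[OF cf] by blast
    show ?thesis
    proof (rule Bochner_Integration.integrable_bound[OF integrable_mult_right[OF gi', of B]])
      show "(\<lambda>t. f t * g t) \<in> borel_measurable N" using measN[OF cf] gm by measurable
      show "AE t in N. norm (f t * g t) \<le> norm (B * g t)"
      proof (rule AE_I2)
        fix t assume "t \<in> space N"
        then have "\<bar>f t\<bar> \<le> \<bar>B\<bar>" using B spN by force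
        then show "norm (f t * g t) \<le> norm (B * g t)"
          by (simp add: abs_mult mult_right_mono)
      qed
    qed
  qed
  have contpow: "continuous_on {0..1} (\<lambda>t::real. t ^ i)" for i by (intro continuous_intros)
  have polyM: "(\<integral>t. (\<Sum>i\<le>m. \<alpha> i * t^i) \<partial>M) = (\<Sum>i\<le>m. \<alpha> i * x i)" for \<alpha> m
  proof -
    have "(\<integral>t. (\<Sum>i\<le>m. \<alpha> i * t^i) \<partial>M) = (\<Sum>i\<le>m. \<integral>t. \<alpha> i * t^i \<partial>M)"
      by (rule Bochner_Integration.integral_sum) (auto intro!: intM continuous_intros)
    then show ?thesis by (simp add: xM)
  qed
  have polyN: "(\<integral>t. (\<Sum>i\<le>m. \<alpha> i * t^i) * g t \<partial>N) = (\<Sum>i\<le>m. \<alpha> i * x i)" for \<alpha> m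
  proof -
    have "(\<integral>t. (\<Sum>i\<le>m. \<alpha> i * t^i) * g t \<partial>N) = (\<integral>t. (\<Sum>i\<le>m. \<alpha> i * (t^i * g t)) \<partial>N)"
      by (simp add: sum_distrib_right mult.assoc)
    also have "\<dots> = (\<Sum>i\<le>m. \<alpha> i * (\<integral>t. t^i * g t \<partial>N))"
    proof -
      have "(\<integral>t. (\<Sum>i\<le>m. \<alpha> i * (t^i * g t)) \<partial>N) = (\<Sum>i\<le>m. \<integral>t. \<alpha> i * (t^i * g t) \<partial>N)"
        by (rule Bochner_Integration.integral_sum) (auto intro!: intN contpow)
      then show ?thesis by simp
    qed
    finally show ?thesis by (simp add: xg N_def)
  qed
  obtain d where d: "d > 0" "\<And>t. dist t t0 < d \<Longrightarrow> dist (g t) (g t0) < - g t0 / 2"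
    using gc gneg unfolding continuous_at_eps_delta by (metis neg_0_less_iff_less half_gt_zero)
  define \<delta> where "\<delta> = min d (min t0 (1 - t0))"
  have \<delta>: "\<delta> > 0" "\<delta> \<le> d" "\<delta> \<le> t0" "\<delta> \<le> 1 - t0" using d t0 by (auto simp: \<delta>_def)
  have gd: "g t < g t0 / 2" if "\<bar>t - t0\<bar> < \<delta>" for t
    using d(2)[of t] that \<delta> by (auto simp: dist_real_def)
  define \<phi> where "\<phi> = (\<lambda>t::real. max 0 (\<delta> - \<bar>t - t0\<bar>))"
  have \<phi>c: "continuous_on {0..1} \<phi>" unfolding \<phi>_def by (intro continuous_intros)
  have \<phi>0: "\<phi> t \<ge> 0" for t unfolding \<phi>_def by simp
  define I where "I = {t0 - \<delta>/2 .. t0 + \<delta>/2}"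
  define h where "h = (\<lambda>t. indicator I t * (\<delta> / 2 * (g t0 / 2)))"
  have hle: "\<phi> t * g t \<le> h t" for t
  proof (cases "t \<in> I")
    case True
    then have t: "\<bar>t - t0\<bar> < \<delta>" "\<phi> t \<ge> \<delta>/2" using \<delta> by (auto simp: I_def \<phi>_def abs_le_iff abs_if)
    have "\<phi> t * g t \<le> \<delta>/2 * g t"
      using t gd[OF t(1)] gneg by (intro mult_right_mono_neg) auto
    also have "\<dots> \<le> \<delta>/2 * (g t0 / 2)" using gd[OF t(1)] \<delta> by simp
    finally show ?thesis using True by (simp add: h_def)
  next
    case False
    show ?thesis
    proof (cases "\<bar>t - t0\<bar> < \<delta>")
      case True
      then have "g t < 0" using gd gneg by fastforce
      then have "\<phi> t * g t \<le> 0" using \<phi>0[of t] by (simp add: mult_nonneg_nonpos)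
      then show ?thesis using False by (simp add: h_def)
    next
      case False
      then have "\<phi> t = 0" by (simp add: \<phi>_def)
      then show ?thesis using \<open>t \<notin> I\<close> by (simp add: h_def)
    qed
  qed
  have IN: "I \<subseteq> {0..1}" using \<delta> by (auto simp: I_def)
  have Is: "I \<in> sets N" unfolding N_def using IN by (simp add: sets_restrict_space_iff I_def)
  have Ie: "emeasure N I < \<infinity>" unfolding N_def using IN \<delta>(1) by (simp add: emeasure_restrict_space I_def)
  have hint: "integrable N h" unfolding h_def
    by (intro integrable_mult_left integrable_real_indicator Is Ie)
  have hval: "(\<integral>t. h t \<partial>N) = \<delta> * (\<delta> / 2 * (g t0 / 2))"
  proof -
    have "measure N I = \<delta>" unfolding N_def I_def using IN \<delta> by (simp add: measure_restrict_space I_def)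
    then show ?thesis unfolding h_def using IN by (simp add: spN Int_absorb2)
  qed
  define \<eta> where "\<eta> = - (\<integral>t. \<phi> t * g t \<partial>N)"
  have \<eta>: "\<eta> > 0"
  proof -
    have "(\<integral>t. \<phi> t * g t \<partial>N) \<le> (\<integral>t. h t \<partial>N)"
      by (rule integral_mono[OF intN[OF \<phi>c] hint hle])
    also have "\<dots> < 0" unfolding hval using \<delta> gneg by (simp add: mult_pos_neg)
    finally show ?thesis by (simp add: \<eta>_def)
  qed
  define C where "C = measure M (space M) + (\<integral>t. \<bar>g t\<bar> \<partial>N)"
  have C0: "C \<ge> 0" unfolding C_def by (auto intro!: add_nonneg_nonneg integral_nonneg_AE)
  define \<epsilon> where "\<epsilon> = \<eta> / (2 * (C + 1))"
  have \<epsilon>: "\<epsilon> > 0" "\<epsilon> * C < \<eta>" using \<eta> C0 by (auto simp: \<epsilon>_def field_simps add_nonneg_pos mult_nonneg_nonneg)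
  obtain P where P: "real_polynomial_function P" "\<And>t. t \<in> {0..1} \<Longrightarrow> \<bar>\<phi> t - P t\<bar> < \<epsilon>"
    using Stone_Weierstrass_real_polynomial_function[OF compact_Icc \<phi>c \<epsilon>(1)] by blast
  obtain \<alpha> m where Pe: "P = (\<lambda>t. \<Sum>i\<le>m. \<alpha> i * t^i)"
    using P(1) unfolding real_polynomial_function_iff_sum by blast
  have Pc: "continuous_on {0..1} P" unfolding Pe by (intro continuous_intros)
  have eqPM: "(\<integral>t. P t \<partial>M) = (\<integral>t. P t * g t \<partial>N)" unfolding Pe polyM polyN ..
  have "(\<integral>t. \<phi> t \<partial>M) - (\<integral>t. P t \<partial>M) = (\<integral>t. \<phi> t - P t \<partial>M)"
    using intM[OF \<phi>c] intM[OF Pc] by simp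
  also have "\<dots> \<le> (\<integral>t. \<epsilon> \<partial>M)"
  proof (rule integral_mono)
    fix t assume "t \<in> space M"
    then have "\<bar>\<phi> t - P t\<bar> < \<epsilon>" using P(2) spM by blast
    then show "\<phi> t - P t \<le> \<epsilon>" by simp
  qed (use intM[OF \<phi>c] intM[OF Pc] in auto)
  also have "\<dots> = \<epsilon> * measure M (space M)" by simp
  finally have e1: "(\<integral>t. \<phi> t \<partial>M) \<le> (\<integral>t. P t \<partial>M) + \<epsilon> * measure M (space M)" by simp
  have "(\<integral>t. P t * g t \<partial>N) - (\<integral>t. \<phi> t * g t \<partial>N) = (\<integral>t. (P t - \<phi> t) * g t \<partial>N)"
    using intN[OF \<phi>c] intN[OF Pc] by (simp add: left_diff_distrib)
  also have "\<dots> \<le> (\<integral>t. \<epsilon> * \<bar>g t\<bar> \<partial>N)"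
  proof (rule integral_mono)
    show "integrable N (\<lambda>t. (P t - \<phi> t) * g t)"
      using intN[OF Pc] intN[OF \<phi>c] by (simp add: left_diff_distrib)
    show "integrable N (\<lambda>t. \<epsilon> * \<bar>g t\<bar>)" using gi' by simp
    fix t assume "t \<in> space N"
    then have "\<bar>P t - \<phi> t\<bar> \<le> \<epsilon>" using P(2)[of t] spN by (simp add: abs_minus_commute)
    then have "\<bar>P t - \<phi> t\<bar> * \<bar>g t\<bar> \<le> \<epsilon> * \<bar>g t\<bar>" by (simp add: mult_right_mono)
    then show "(P t - \<phi> t) * g t \<le> \<epsilon> * \<bar>g t\<bar>"
      by (metis abs_ge_self abs_mult order.trans)
  qed
  also have "\<dots> = \<epsilon> * (\<integral>t. \<bar>g t\<bar> \<partial>N)" by simp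
  finally have e2: "(\<integral>t. P t * g t \<partial>N) \<le> (\<integral>t. \<phi> t * g t \<partial>N) + \<epsilon> * (\<integral>t. \<bar>g t\<bar> \<partial>N)" by simp
  have "0 \<le> (\<integral>t. \<phi> t \<partial>M)" by (rule integral_nonneg_AE) (simp add: \<phi>0)
  also have "\<dots> \<le> - \<eta> + \<epsilon> * C"
    using e1 e2 eqPM unfolding \<eta>_def C_def by (simp add: algebra_simps)
  finally show False using \<epsilon> by simp
qed



lemma poly_ofreal: "poly (map_poly complex_of_real p) (complex_of_real x) = complex_of_real (poly p x)"
  by (induction p) (auto simp: map_poly_pCons)

lemma cnj_ofreal_poly: "map_poly cnj (map_poly complex_of_real p) = map_poly complex_of_real p"
  by (rule poly_eqI) (simp add: coeff_map_poly)

lemma map_cnj_mult: "map_poly cnj (X * Y) = map_poly cnj X * map_poly cnj (Y :: complex poly)"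
  by (rule poly_eq_poly_eq_iff[THEN iffD1]) (auto simp: fun_eq_iff)

lemma map_cnj_linpow: "map_poly cnj ([:-a,1:]^n) = [:-cnj a,1:]^n"
  by (rule poly_eq_poly_eq_iff[THEN iffD1]) (auto simp: fun_eq_iff poly_power)

lemma dvd_cnj:
  assumes "map_poly cnj P = P" "[:-a,1:]^n dvd P"
  shows "[:-cnj a,1:]^n dvd P"
proof -
  obtain k where "P = [:-a,1:]^n * k" using assms(2) by (auto elim: dvdE)
  then have "map_poly cnj P = [:-cnj a,1:]^n * map_poly cnj k" by (simp only: map_cnj_mult map_cnj_linpow)
  then show ?thesis using assms(1) by (metis dvd_triv_left)
qed

lemma order_cnj:
  assumes "map_poly cnj P = P" "P \<noteq> 0"
  shows "order (cnj a) P = order a P"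
proof -
  have "[:-cnj a,1:]^(order a P) dvd P" by (rule dvd_cnj[OF assms(1) order_1])
  moreover have "\<not> [:-cnj a,1:]^Suc (order a P) dvd P"
  proof
    assume "[:-cnj a,1:]^Suc (order a P) dvd P"
    from dvd_cnj[OF assms(1) this] have "[:-a,1:]^Suc (order a P) dvd P" by simp
    then show False using order_2[OF assms(2)] by blast
  qed
  ultimately show ?thesis by (metis order_unique_lemma)
qed

lemma Bp_mult:
  assumes "finite A" "a \<in> A" "j < mu a"
  shows "Bp A mu a j * [:-a,1:]^(Suc j) = (\<Prod>b\<in>A. [:-b,1:]^(mu b))"
proof -
  have e1: "(\<Prod>b\<in>A. [:-b,1:]^(mu b)) = [:-a,1:]^(mu a) * (\<Prod>b\<in>A-{a}. [:-b,1:]^(mu b))"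
    using assms by (simp add: prod.remove)
  have "mu a = (mu a - Suc j) + Suc j" using assms(3) by simp
  then have e2: "[:-a,1:]^(mu a) = [:-a,1:]^(mu a - Suc j) * [:-a,1:]^(Suc j)"
    by (metis power_add)
  show ?thesis unfolding Bp_def e1 e2 by (simp only: mult_ac)
qed

lemma Bp_root:
  assumes "finite A" "a \<in> A" "b \<in> A" "mu a > 0" "j < mu b" "\<not> (b = a \<and> j = mu a - 1)"
  shows "poly (Bp A mu b j) a = 0"
proof (cases "b = a")
  case True
  then have "mu a - Suc j > 0" using assms by auto
  then show ?thesis using True by (simp add: Bp_def poly_power)
next
  case False
  then have aA: "a \<in> A - {b}" using assms by auto
  have "poly (\<Prod>b'\<in>A-{b}. [:-b',1:]^(mu b')) a = 0"
    unfolding poly_prod using assms aA by (subst prod_zero_iff) (auto simp: poly_power intro!: bexI[of _ a])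
  then show ?thesis by (simp add: Bp_def)
qed

lemma Bp_top_nz:
  assumes "finite A" "a \<in> A"
  shows "poly (Bp A mu a (mu a - 1)) a \<noteq> 0"
proof -
  have e: "mu a - Suc (mu a - 1) = 0" by simp
  have "(\<Prod>k\<in>A - {a}. poly ([:- k, 1:] ^ mu k) a) \<noteq> 0"
    using assms by (subst prod_zero_iff) (auto simp: poly_power)
  then show ?thesis unfolding Bp_def poly_mult poly_prod e by simp
qed

lemma pf_coeff:
  assumes "finite A" "a \<in> A" "mu a > 0"
    and "Q = (\<Sum>b\<in>A. \<Sum>j<mu b. smult (c b j) (Bp A mu b j))"
  shows "poly Q a = c a (mu a - 1) * poly (Bp A mu a (mu a - 1)) a"
proof -
  have "poly Q a = (\<Sum>b\<in>A. \<Sum>j<mu b. c b j * poly (Bp A mu b j) a)"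
    using assms(4) by (simp add: poly_sum)
  also have "\<dots> = (\<Sum>j<mu a. c a j * poly (Bp A mu a j) a) + (\<Sum>b\<in>A-{a}. \<Sum>j<mu b. c b j * poly (Bp A mu b j) a)"
    using assms by (simp add: sum.remove)
  also have "(\<Sum>b\<in>A-{a}. \<Sum>j<mu b. c b j * poly (Bp A mu b j) a) = 0"
    using assms by (intro sum.neutral ballI) (auto simp: Bp_root)
  also have "{..<mu a} = insert (mu a - 1) {..<mu a - 1}" using assms(3) by auto
  also have "(\<Sum>j\<in>insert (mu a - 1) {..<mu a - 1}. c a j * poly (Bp A mu a j) a) =
      c a (mu a - 1) * poly (Bp A mu a (mu a - 1)) a + (\<Sum>j<mu a - 1. c a j * poly (Bp A mu a j) a)"
    by simp
  also have "(\<Sum>j<mu a - 1. c a j * poly (Bp A mu a j) a) = 0"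
    using assms by (intro sum.neutral ballI) (auto simp: Bp_root)
  finally show ?thesis by simp
qed

lemma pf_eval:
  assumes "finite A" "poly (\<Prod>b\<in>A. [:-b,1:]^(mu b)) x \<noteq> 0"
    and "Q = (\<Sum>b\<in>A. \<Sum>j<mu b. smult (c b j) (Bp A mu b j))"
  shows "poly Q x / poly (\<Prod>b\<in>A. [:-b,1:]^(mu b)) x = (\<Sum>b\<in>A. \<Sum>j<mu b. c b j / (x - b)^Suc j)"
proof -
  let ?P = "\<Prod>b\<in>A. [:-b,1:]^(mu b)"
  have B: "poly (Bp A mu b j) x = poly ?P x / (x - b)^Suc j" if "b \<in> A" "j < mu b" for b j
  proof -
    have "poly (Bp A mu b j) x * (x - b)^Suc j = poly ?P x"
      using arg_cong[OF Bp_mult[where mu=mu, OF assms(1) that], of "\<lambda>p. poly p x"]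
      by (simp only: poly_mult poly_power) (simp add: algebra_simps)
    moreover have "(x - b)^Suc j \<noteq> 0" using assms(2) calculation by auto
    ultimately show ?thesis by (simp add: field_simps)
  qed
  have "poly Q x = (\<Sum>b\<in>A. \<Sum>j<mu b. c b j * (poly ?P x / (x - b)^Suc j))"
    using assms(3) by (simp add: poly_sum B)
  also have "\<dots> = poly ?P x * (\<Sum>b\<in>A. \<Sum>j<mu b. c b j / (x - b)^Suc j)"
    by (simp add: sum_distrib_left mult_ac)
  finally show ?thesis using assms(2) by simp
qed

lemma ee_cont:
  assumes "t > 0"
  shows "isCont (ee b k) t"
proof -
  have z: "complex_of_real t \<notin> \<real>\<^sub>\<le>\<^sub>0" using assms by (auto simp: complex_nonpos_Reals_iff)
  have "isCont (\<lambda>t. exp (b * Ln (complex_of_real t)) / complex_of_real t * (- Ln (complex_of_real t)) ^ k) t"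
    using z assms by (auto intro!: continuous_intros)
  then show ?thesis unfolding ee_def EE_def .
qed

lemma ee_exp:
  assumes "u > 0"
  shows "ee (- a) j (exp (- u)) = exp (a * of_real u + of_real u) * of_real (u ^ j)"
proof -
  have "ee (- a) j (exp (- u)) = exp (a * of_real u) / exp (- of_real u) * of_real (u ^ j)"
    by (simp add: ee_pos exp_of_real[symmetric])
  also have "\<dots> = exp (a * of_real u + of_real u) * of_real (u ^ j)"
    by (simp add: exp_add exp_minus field_simps)
  finally show ?thesis .
qed

theorem core:
  fixes p q :: "real poly" and z1 :: complex
  assumes monic: "lead_coeff p = 1"
    and rootsneg: "\<And>a. poly (map_poly complex_of_real p) a = 0 \<Longrightarrow> Re a < 0"
    and z1root: "poly (map_poly complex_of_real p) z1 = 0"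
    and z1im: "Im z1 > 0"
    and qz1: "poly (map_poly complex_of_real q) z1 \<noteq> 0"
    and dom: "\<And>a. poly (map_poly complex_of_real p) a = 0 \<Longrightarrow> a \<noteq> z1 \<Longrightarrow> a \<noteq> cnj z1 \<Longrightarrow> Re a < Re z1"
    and deg: "degree q < degree p"
  shows "\<not> hausdorff_moment_seq (\<lambda>n. poly q (real n) / poly p (real n))"
proof
  define R where "R = (\<lambda>n::nat. poly q (real n) / poly p (real n))"
  assume "hausdorff_moment_seq (\<lambda>n. poly q (real n) / poly p (real n))"
  then obtain M :: "real measure" where sM: "sets M = sets (restrict_space borel {0..1})"
     and fin: "emeasure M (space M) < \<infinity>" and xM: "\<And>n. R n = (\<integral>t. t^n \<partial>M)"
    unfolding hausdorff_moment_seq_def R_def by blast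
  define P where "P = map_poly complex_of_real p"
  define Q where "Q = map_poly complex_of_real q"
  have degP: "degree P = degree p" unfolding P_def by (rule degree_map_poly) simp
  have degQ: "degree Q = degree q" unfolding Q_def by (rule degree_map_poly) simp
  have "lead_coeff P = complex_of_real (lead_coeff p)" unfolding degP by (simp add: P_def coeff_map_poly)
  then have lcP: "lead_coeff P = 1" using monic by simp
  then have P0: "P \<noteq> 0" by auto
  have Pcnj: "map_poly cnj P = P" unfolding P_def by (rule cnj_ofreal_poly)
  have Qcnj: "map_poly cnj Q = Q" unfolding Q_def by (rule cnj_ofreal_poly)
  define A where "A = {a. poly P a = 0}"
  have finA: "finite A" unfolding A_def using P0 by (rule poly_roots_finite)
  define mu where "mu = (\<lambda>a. order a P)"
  have Pprod: "P = (\<Prod>a\<in>A. [:-a,1:]^(mu a))"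
    using complex_poly_decompose[of P] lcP unfolding A_def mu_def by simp
  have mupos: "mu a > 0" if "a \<in> A" for a using that P0 unfolding A_def mu_def by (simp add: order_root)
  obtain c where cQ: "Q = (\<Sum>a\<in>A. \<Sum>j<mu a. smult (c a j) (Bp A mu a j))"
    using pf_exists[OF finA, of Q mu] Pprod degP degQ deg by auto
  have Ain: "Re a < 0" if "a \<in> A" for a using that rootsneg unfolding A_def P_def by blast
  have Pn: "poly P (of_nat n) \<noteq> 0" for n
  proof
    assume "poly P (of_nat n) = 0"
    then have "Re (of_nat n :: complex) < 0" using Ain unfolding A_def by blast
    then show False by simp
  qed
  have Rn: "complex_of_real (R n) = (\<Sum>a\<in>A. \<Sum>j<mu a. c a j / (of_nat n - a)^Suc j)" for n
  proof -
    have "complex_of_real (R n) = poly Q (of_nat n) / poly P (of_nat n)"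
      unfolding R_def P_def Q_def using poly_ofreal[of q "real n"] poly_ofreal[of p "real n"] by simp
    also have "\<dots> = (\<Sum>a\<in>A. \<Sum>j<mu a. c a j / (of_nat n - a)^Suc j)"
      using pf_eval[OF finA _ cQ, of "of_nat n"] Pn Pprod by simp
    finally show ?thesis .
  qed
  define G where "G = (\<lambda>t. \<Sum>a\<in>A. \<Sum>j<mu a. (c a j / fact j) * ee (- a) j t)"
  define g where "g = (\<lambda>t. Re (G t))"
  define N where "N = lebesgue_on {0..1::real}"
  have spN: "space N = {0..1}" unfolding N_def by simp
  have eeint: "integrable N (ee (of_nat n - a) j)"
     "integral\<^sup>L N (ee (of_nat n - a) j) = fact j / (of_nat n - a)^Suc j" if "a \<in> A" for a n j
  proof -
    have "Re (of_nat n - a) > 0" using Ain[OF that] by simp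
    then show "integrable N (ee (of_nat n - a) j)"
     "integral\<^sup>L N (ee (of_nat n - a) j) = fact j / (of_nat n - a)^Suc j"
      using ee_leb unfolding N_def by auto
  qed
  have Gshift: "of_real (t^n) * G t = (\<Sum>a\<in>A. \<Sum>j<mu a. (c a j / fact j) * ee (of_nat n - a) j t)"
    if "t \<ge> 0" for t n
  proof -
    have "of_real (t^n) * ee (- a) j t = ee (of_nat n - a) j t" for a j
      using ee_shift[OF that, of n "- a" j] by simp
    then show ?thesis unfolding G_def sum_distrib_left
      by (intro sum.cong refl) (metis mult.left_commute)
  qed
  have GN: "integrable N (\<lambda>t. of_real (t^n) * G t) \<and>
      integral\<^sup>L N (\<lambda>t. of_real (t^n) * G t) = complex_of_real (R n)" for n
  proof -
    have int2: "integrable N (\<lambda>t. \<Sum>a\<in>A. \<Sum>j<mu a. (c a j / fact j) * ee (of_nat n - a) j t)"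
      using eeint by (intro Bochner_Integration.integrable_sum integrable_mult_right) auto
    have eq: "integral\<^sup>L N (\<lambda>t. of_real (t^n) * G t) =
        integral\<^sup>L N (\<lambda>t. \<Sum>a\<in>A. \<Sum>j<mu a. (c a j / fact j) * ee (of_nat n - a) j t)"
      by (rule Bochner_Integration.integral_cong[OF refl], rule Gshift) (simp add: spN)
    have int1: "integrable N (\<lambda>t. of_real (t^n) * G t)"
      by (rule Bochner_Integration.integrable_cong[THEN iffD2, OF refl _ int2], rule Gshift) (simp add: spN)
    have "integral\<^sup>L N (\<lambda>t. \<Sum>a\<in>A. \<Sum>j<mu a. (c a j / fact j) * ee (of_nat n - a) j t) =
        (\<Sum>a\<in>A. \<Sum>j<mu a. (c a j / fact j) * integral\<^sup>L N (ee (of_nat n - a) j))"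
      using eeint by (subst Bochner_Integration.integral_sum) (auto intro!: Bochner_Integration.integrable_sum sum.cong
          simp: Bochner_Integration.integral_sum)
    also have "\<dots> = (\<Sum>a\<in>A. \<Sum>j<mu a. c a j / (of_nat n - a)^Suc j)"
      using eeint by (intro sum.cong refl) simp
    finally show ?thesis using int1 eq Rn by simp
  qed
  have Gi: "integrable N G" using GN[of 0] by simp
  have gi: "integrable N g" unfolding g_def using Gi by simp
  have xg: "R n = (\<integral>t. t^n * g t \<partial>N)" for n
  proof -
    have "(\<integral>t. t^n * g t \<partial>N) = (\<integral>t. Re (of_real (t^n) * G t) \<partial>N)" by (simp add: g_def)
    also have "\<dots> = Re (integral\<^sup>L N (\<lambda>t. of_real (t^n) * G t))"
      by (rule integral_Re) (use GN[of n] in blast)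
    also have "\<dots> = R n" using GN[of n] by simp
    finally show ?thesis by simp
  qed
  define x1 where "x1 = Re z1"
  define y1 where "y1 = Im z1"
  define K where "K = mu z1 - 1"
  have z1A: "z1 \<in> A" using z1root unfolding A_def P_def by simp
  have cz1A: "cnj z1 \<in> A"
  proof -
    have "poly P (cnj z1) = cnj (poly P z1)" using poly_map_poly_cnj[of P "cnj z1"] Pcnj by simp
    then show ?thesis using z1A unfolding A_def by simp
  qed
  have mucnj: "mu (cnj z1) = mu z1" unfolding mu_def by (rule order_cnj[OF Pcnj P0])
  have z1ne: "cnj z1 \<noteq> z1" using z1im by (auto simp: complex_eq_iff)
  have Kmu: "Suc K = mu z1" using mupos[OF z1A] by (simp add: K_def)
  define c1 where "c1 = c z1 K"
  define c2 where "c2 = c (cnj z1) K"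
  define W1 where "W1 = Bp A mu z1 K"
  define W2 where "W2 = Bp A mu (cnj z1) K"
  have W1nz: "poly W1 z1 \<noteq> 0" unfolding W1_def K_def by (rule Bp_top_nz[OF finA z1A])
  have c1v: "poly Q z1 = c1 * poly W1 z1"
    unfolding c1_def W1_def K_def by (rule pf_coeff[OF finA z1A mupos[OF z1A] cQ])
  have c2v: "poly Q (cnj z1) = c2 * poly W2 (cnj z1)"
    unfolding c2_def W2_def K_def using pf_coeff[OF finA cz1A mupos[OF cz1A] cQ] mucnj by simp
  have qz1': "poly Q z1 \<noteq> 0" using qz1 unfolding Q_def .
  have c1nz: "c1 \<noteq> 0" using c1v qz1' by auto
  have W12: "W2 = map_poly cnj W1"
  proof -
    have "W1 * [:-z1,1:]^(Suc K) = P" unfolding W1_def Pprod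
      by (rule Bp_mult[OF finA z1A]) (simp add: Kmu[symmetric])
    then have "map_poly cnj (W1 * [:-z1,1:]^(Suc K)) = P" using Pcnj by simp
    then have e1: "map_poly cnj W1 * [:-cnj z1,1:]^(Suc K) = P" by (simp only: map_cnj_mult map_cnj_linpow)
    have e2: "W2 * [:-cnj z1,1:]^(Suc K) = P" unfolding W2_def Pprod
      by (rule Bp_mult[OF finA cz1A]) (simp add: Kmu[symmetric] mucnj)
    have X0: "[:-cnj z1,1:]^(Suc K) \<noteq> 0" by (simp only: power_eq_0_iff pCons_eq_0_iff) simp
    from e1 e2 have "map_poly cnj W1 * [:-cnj z1,1:]^(Suc K) = W2 * [:-cnj z1,1:]^(Suc K)" by simp
    then show ?thesis using mult_right_cancel[OF X0] by simp
  qed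
  have c2c1: "c2 = cnj c1"
  proof -
    have "poly W2 (cnj z1) = cnj (poly W1 z1)" by (simp add: W12)
    moreover have "poly Q (cnj z1) = cnj (poly Q z1)" using poly_map_poly_cnj[of Q "cnj z1"] Qcnj by simp
    ultimately have "c2 * cnj (poly W1 z1) = cnj c1 * cnj (poly W1 z1)" using c1v c2v by simp
    moreover have "cnj (poly W1 z1) \<noteq> 0" using W1nz by simp
    ultimately show ?thesis by simp
  qed
  define T where "T = (\<lambda>(a, j) (u::real). (c a j / fact j) * exp ((a - of_real x1) * of_real u) * of_real (u^j / u^K))"
  define S where "S = (\<lambda>u. \<Sum>a\<in>A. \<Sum>j<mu a. T (a, j) u)"
  have GS: "G (exp (- u)) = of_real (exp ((x1 + 1) * u) * u^K) * S u" if "u > 0" for u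
  proof -
    have "(c a j / fact j) * ee (- a) j (exp (- u)) = of_real (exp ((x1 + 1) * u) * u^K) * T (a, j) u" for a j
    proof -
      define E where "E = exp ((x1 + 1) * u)"
      have e: "exp (a * of_real u + of_real u) = of_real E * exp ((a - of_real x1) * of_real u)"
        unfolding E_def by (simp add: exp_of_real[symmetric] exp_add[symmetric] algebra_simps)
      show ?thesis using that unfolding T_def ee_exp[OF that] e E_def[symmetric]
        by (simp add: field_simps)
    qed
    then show ?thesis unfolding G_def S_def sum_distrib_left by simp
  qed
  define Mn where "Mn = (\<lambda>u::real. (c1 / fact K) * cis (y1 * u) + (c2 / fact K) * cis (- y1 * u))"
  define Sig where "Sig = Sigma A (\<lambda>a. {..<mu a})"
  have finSig: "finite Sig" unfolding Sig_def using finA by auto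
  have m1: "(z1, K) \<in> Sig" "(cnj z1, K) \<in> Sig" unfolding Sig_def using z1A cz1A Kmu mucnj by auto
  have Tz1: "T (z1, K) u = (c1 / fact K) * cis (y1 * u)" if "u > 0" for u
  proof -
    have "(z1 - of_real x1) * of_real u = \<i> * of_real (y1 * u)"
      by (simp add: complex_eq_iff x1_def y1_def)
    then show ?thesis using that unfolding T_def c1_def by (simp add: cis_conv_exp mult_ac)
  qed
  have Tz2: "T (cnj z1, K) u = (c2 / fact K) * cis (- y1 * u)" if "u > 0" for u
  proof -
    have "(cnj z1 - of_real x1) * of_real u = \<i> * of_real (- y1 * u)"
      by (simp add: complex_eq_iff x1_def y1_def)
    then show ?thesis using that unfolding T_def c2_def by (simp add: cis_conv_exp mult_ac)
  qed
  have SM: "S u - Mn u = (\<Sum>aj\<in>Sig - {(z1, K), (cnj z1, K)}. T aj u)" if "u > 0" for u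
  proof -
    have "S u = (\<Sum>aj\<in>Sig. T aj u)" unfolding S_def Sig_def
      using finA by (subst sum.Sigma) auto
    also have "\<dots> = T (z1, K) u + (\<Sum>aj\<in>Sig - {(z1, K)}. T aj u)"
      using finSig m1 by (simp add: sum.remove)
    also have "(\<Sum>aj\<in>Sig - {(z1, K)}. T aj u) = T (cnj z1, K) u + (\<Sum>aj\<in>Sig - {(z1, K)} - {(cnj z1, K)}. T aj u)"
      using finSig m1 z1ne by (subst sum.remove[of _ "(cnj z1, K)"]) auto
    also have "Sig - {(z1, K)} - {(cnj z1, K)} = Sig - {(z1, K), (cnj z1, K)}" by auto
    finally show ?thesis unfolding Mn_def using Tz1[OF that] Tz2[OF that] by simp
  qed
  have Tlim: "((\<lambda>u. T aj u) \<longlongrightarrow> 0) at_top" if aj: "aj \<in> Sig - {(z1, K), (cnj z1, K)}" for aj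
  proof -
    obtain a j where aj_eq: "aj = (a, j)" by (cases aj)
    have aA: "a \<in> A" and jm: "j < mu a" using aj unfolding aj_eq Sig_def by auto
    have nT: "norm (T (a, j) u) = cmod (c a j) / fact j * (exp ((Re a - x1) * u) * (u^j / u^K))" if "u > 0" for u
      using that unfolding T_def by (simp add: norm_mult norm_divide norm_power)
    show ?thesis
    proof (cases "a = z1 \<or> a = cnj z1")
      case True
      then have Rea: "Re a = x1" by (auto simp: x1_def)
      have "j \<noteq> K" using aj True unfolding aj_eq by auto
      moreover have "j < Suc K" using jm True Kmu mucnj by auto
      ultimately have jK: "j < K" by simp
      have l: "((\<lambda>u::real. inverse (u ^ (K - j))) \<longlongrightarrow> 0) at_top"
        by (intro tendsto_inverse_0_at_top filterlim_pow_at_top filterlim_ident) (use jK in simp)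
      have "((\<lambda>u::real. cmod (c a j) / fact j * inverse (u ^ (K - j))) \<longlongrightarrow> cmod (c a j) / fact j * 0) at_top"
        by (intro tendsto_mult tendsto_const l)
      then have l2: "((\<lambda>u::real. cmod (c a j) / fact j * inverse (u ^ (K - j))) \<longlongrightarrow> 0) at_top" by simp
      show ?thesis unfolding aj_eq
      proof (rule Lim_null_comparison[OF _ l2])
        show "\<forall>\<^sub>F u in at_top. norm (T (a, j) u) \<le> cmod (c a j) / fact j * inverse (u ^ (K - j))"
        proof (rule eventually_at_top_linorderI[of 1])
          fix u :: real assume u: "u \<ge> 1"
          have "u^j / u^K = inverse (u ^ (K - j))"
            using u jK by (simp add: power_diff field_simps)
          then show "norm (T (a, j) u) \<le> cmod (c a j) / fact j * inverse (u ^ (K - j))"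
            using nT[of u] u Rea by simp
        qed
      qed
    next
      case False
      then have Rea: "Re a < x1" using dom[of a] aA unfolding A_def P_def x1_def by auto
      have l: "((\<lambda>u. exp (- (x1 - Re a) * u) * u ^ j) \<longlongrightarrow> 0) at_top"
        by (rule expu_lim) (use Rea in simp)
      have "((\<lambda>u::real. cmod (c a j) / fact j * (exp (- (x1 - Re a) * u) * u ^ j)) \<longlongrightarrow> cmod (c a j) / fact j * 0) at_top"
        by (intro tendsto_mult tendsto_const l)
      then have l2: "((\<lambda>u::real. cmod (c a j) / fact j * (exp (- (x1 - Re a) * u) * u ^ j)) \<longlongrightarrow> 0) at_top" by simp
      show ?thesis unfolding aj_eq
      proof (rule Lim_null_comparison[OF _ l2])
        show "\<forall>\<^sub>F u in at_top. norm (T (a, j) u) \<le> cmod (c a j) / fact j * (exp (- (x1 - Re a) * u) * u ^ j)"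
        proof (rule eventually_at_top_linorderI[of 1])
          fix u :: real assume u: "u \<ge> 1"
          have "u^j / u^K \<le> u^j"
            using u by (simp add: divide_le_eq one_le_power mult_le_cancel_left1)
          then have le: "exp ((Re a - x1) * u) * (u^j / u^K) \<le> exp ((Re a - x1) * u) * u ^ j"
            by (intro mult_left_mono) auto
          have "(Re a - x1) * u = - (x1 - Re a) * u" by (simp add: algebra_simps)
          then have le2: "exp ((Re a - x1) * u) * (u^j / u^K) \<le> exp (- (x1 - Re a) * u) * u ^ j"
            using le by (simp only:)
          have "norm (T (a, j) u) = cmod (c a j) / fact j * (exp ((Re a - x1) * u) * (u^j / u^K))"
            by (rule nT) (use u in simp)
          also have "\<dots> \<le> cmod (c a j) / fact j * (exp (- (x1 - Re a) * u) * u ^ j)"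
            by (rule mult_left_mono[OF le2]) simp
          finally show "norm (T (a, j) u) \<le> cmod (c a j) / fact j * (exp (- (x1 - Re a) * u) * u ^ j)" .
        qed
      qed
    qed
  qed
  have lim: "((\<lambda>u. S u - Mn u) \<longlongrightarrow> 0) at_top"
  proof -
    have "((\<lambda>u. \<Sum>aj\<in>Sig - {(z1, K), (cnj z1, K)}. T aj u) \<longlongrightarrow> 0) at_top"
      by (rule tendsto_null_sum) (use Tlim in auto)
    moreover have "\<forall>\<^sub>F u in at_top. (\<Sum>aj\<in>Sig - {(z1, K), (cnj z1, K)}. T aj u) = S u - Mn u"
      using SM by (intro eventually_at_top_linorderI[of 1]) auto
    ultimately show ?thesis by (rule Lim_transform_eventually)
  qed
  define \<theta> where "\<theta> = pi - Arg c1"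
  have key: "c1 * cis \<theta> = - of_real (cmod c1)"
  proof -
    have "c1 = of_real (cmod c1) * cis (Arg c1)" using rcis_cmod_Arg[of c1] by (simp add: rcis_def)
    then have "c1 * cis \<theta> = of_real (cmod c1) * (cis (Arg c1) * cis \<theta>)" by (metis mult.assoc)
    also have "cis (Arg c1) * cis \<theta> = -1" by (simp add: cis_mult \<theta>_def)
    finally show ?thesis by simp
  qed
  have Refact: "Re (z / fact K) = Re z / fact K" for z :: complex
    using Re_divide_of_real[of z "fact K"] by simp
  have ReM: "Re (Mn u) = - 2 * cmod c1 / fact K" if "cis (y1 * u) = cis \<theta>" for u
  proof -
    have "cis (- y1 * u) = cnj (cis (y1 * u))" by (simp add: cis_cnj)
    then have "Mn u = (c1 * cis \<theta>) / fact K + cnj (c1 * cis \<theta>) / fact K"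
      unfolding Mn_def c2c1 using that by simp
    then have "Re (Mn u) = Re ((c1 * cis \<theta>) / fact K) + Re (cnj (c1 * cis \<theta>) / fact K)" by simp
    also have "\<dots> = - 2 * cmod c1 / fact K" unfolding Refact key by simp
    finally show ?thesis .
  qed
  have fK: "fact K > (0::real)" by simp
  obtain U where U: "\<And>u. u \<ge> U \<Longrightarrow> norm (S u - Mn u) < cmod c1 / fact K"
    using lim[unfolded tendsto_iff, rule_format, of "cmod c1 / fact K"] c1nz fK
    by (auto simp: eventually_at_top_linorder dist_norm)
  obtain n :: nat where n: "(max U 1 * y1 - \<theta>) / (2 * pi) < real n" using reals_Archimedean2 by blast
  define u where "u = (\<theta> + 2 * pi * real n) / y1"
  have y1p: "y1 > 0" using z1im by (simp add: y1_def)
  have uU: "u > max U 1"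
  proof -
    have "max U 1 * y1 - \<theta> < 2 * pi * real n" using n by (simp add: field_simps)
    then have h: "max U 1 * y1 < \<theta> + 2 * pi * real n" by simp
    show ?thesis unfolding u_def by (subst pos_less_divide_eq[OF y1p]) (rule h)
  qed
  then have u0: "u > 0" by simp
  have cisu: "cis (y1 * u) = cis \<theta>"
  proof -
    have "y1 * u = \<theta> + 2 * pi * real n" unfolding u_def using y1p by simp
    then have "cis (y1 * u) = cis \<theta> * cis (2 * pi * real n)" by (simp only: cis_mult)
    also have "cis (2 * pi * real n) = 1" by (rule cis_multiple_2pi) simp
    finally show ?thesis by simp
  qed
  have "Re (S u) = Re (Mn u) + Re (S u - Mn u)" by simp
  also have "\<dots> \<le> Re (Mn u) + norm (S u - Mn u)" using complex_Re_le_cmod[of "S u - Mn u"] by (intro add_left_mono) simp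
  also have "\<dots> < - 2 * cmod c1 / fact K + cmod c1 / fact K"
    using U[of u] uU ReM[OF cisu] by simp
  also have "\<dots> < 0" using c1nz fK by (simp add: field_simps)
  finally have ReS: "Re (S u) < 0" .
  define t0 where "t0 = exp (- u)"
  have t0: "0 < t0" "t0 < 1" using u0 by (auto simp: t0_def)
  have gt0: "g t0 < 0"
  proof -
    have "g t0 = exp ((x1 + 1) * u) * u^K * Re (S u)" unfolding g_def t0_def GS[OF u0] by simp
    also have "\<dots> < 0" using ReS u0 by (simp add: mult_pos_neg)
    finally show ?thesis .
  qed
  have gc: "isCont g t0"
  proof -
    have "isCont G t0" unfolding G_def
      by (intro continuous_sum continuous_mult continuous_const ee_cont t0(1))
    then show ?thesis unfolding g_def by (rule continuous_Re)
  qed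
  show False
    using density_contra[OF sM fin xM gi[unfolded N_def] xg[unfolded N_def] t0 gc gt0] .
qed


theorem mainTheorem4:
  fixes p q :: "real poly"
    and s d :: nat
    and r :: "nat \<Rightarrow> real" and l :: "nat \<Rightarrow> nat"
    and z :: "nat \<Rightarrow> complex" and m :: "nat \<Rightarrow> nat"
  assumes d_pos: "d \<ge> 1"
    and r_distinct: "inj_on r {1..s}"
    and r_neg: "\<forall>i\<in>{1..s}. r i < 0"
    and l_pos: "\<forall>i\<in>{1..s}. l i \<ge> 1"
    and z_distinct: "inj_on z {1..d}"
    and z_re: "\<forall>k\<in>{1..d}. Re (z k) < 0"
    and z_im: "\<forall>k\<in>{1..d}. Im (z k) > 0"
    and m_pos: "\<forall>i\<in>{1..d}. m i \<ge> 1"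
    and p_form: "map_poly complex_of_real p =
        (\<Prod>i\<in>{1..s}. [:- complex_of_real (r i), 1:] ^ l i) *
        (\<Prod>i\<in>{1..d}. [:- z i, 1:] ^ m i) *
        (\<Prod>i\<in>{1..d}. [:- cnj (z i), 1:] ^ m i)"
    and no_common: "\<forall>w::complex. \<not> (poly (map_poly complex_of_real p) w = 0 \<and>
                                     poly (map_poly complex_of_real q) w = 0)"
    and deg: "degree q < degree p"
    and dom_r: "\<forall>i\<in>{1..s}. Re (z 1) > r i"
    and dom_z: "\<forall>i\<in>{2..d}. Re (z 1) > Re (z i)"
  shows "\<not> hausdorff_moment_seq (\<lambda>n. poly q (real n) / poly p (real n))"
proof (rule core)
  define P where "P = map_poly complex_of_real p"
  have roots: "(\<exists>i\<in>{1..s}. a = complex_of_real (r i)) \<or> (\<exists>i\<in>{1..d}. a = z i) \<or> (\<exists>i\<in>{1..d}. a = cnj (z i))"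
    if "poly P a = 0" for a
    using that unfolding P_def p_form by (auto simp: poly_prod poly_power prod_zero_iff)
  have "lead_coeff P = 1" unfolding P_def p_form
    by (simp add: lead_coeff_mult lead_coeff_prod lead_coeff_power)
  moreover have "lead_coeff P = complex_of_real (lead_coeff p)"
    unfolding P_def by (simp add: degree_map_poly coeff_map_poly)
  ultimately show "lead_coeff p = 1" by simp
  show "Re a < 0" if "poly (map_poly complex_of_real p) a = 0" for a
    using roots[OF that[folded P_def]] r_neg z_re by auto
  have d1: "1 \<in> {1..d}" using d_pos by simp
  show z1: "poly (map_poly complex_of_real p) (z 1) = 0"
  proof -
    have m1: "0 < m 1" using m_pos d1 by fastforce
    have "poly (\<Prod>i\<in>{1..d}. [:- z i, 1:] ^ m i) (z 1) = 0" unfolding poly_prod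
      by (subst prod_zero_iff) (use d1 m1 in \<open>auto simp: poly_power intro!: bexI[of _ 1]\<close>)
    then show ?thesis unfolding p_form by simp
  qed
  show "Im (z 1) > 0" using z_im d1 by auto
  show "poly (map_poly complex_of_real q) (z 1) \<noteq> 0" using no_common z1 by blast
  show "Re a < Re (z 1)" if "poly (map_poly complex_of_real p) a = 0" "a \<noteq> z 1" "a \<noteq> cnj (z 1)" for a
  proof -
    from roots[OF that(1)[folded P_def]] show ?thesis
    proof (elim disjE bexE)
      fix i assume "i \<in> {1..s}" "a = complex_of_real (r i)"
      then show ?thesis using dom_r by auto
    next
      fix i assume i: "i \<in> {1..d}" "a = z i"
      then have "i \<noteq> 1" using that(2) by auto
      then have "i \<in> {2..d}" using i by auto
      then show ?thesis using dom_z i by auto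
    next
      fix i assume i: "i \<in> {1..d}" "a = cnj (z i)"
      then have "i \<noteq> 1" using that(3) by auto
      then have "i \<in> {2..d}" using i by auto
      then show ?thesis using dom_z i by auto
    qed
  qed
  show "degree q < degree p" by (rule deg)
qed

end
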